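(* Let $N\ge 1$ be an integer and $a\neq 0$ a complex constant. Let $\big(z_1(\ell),\dots,z_N(\ell)\big)$, $\ell=0,1,2,\dots$, be a sequence of $N$-tuples of complex numbers evolving according to the following discrete-time rule: for every $\ell\ge 0$, the numbers $z_1(\ell+2),\dots,z_N(\ell+2)$ are (in some order, counted with multiplicity) the $N$ roots in $z$ of $$\prod_{j=1}^{N}\frac{z-a^{2}z_j(\ell)}{z-a\,z_j(\ell+1)}=1+a,$$ i.e. of the degree-$N$ polynomial equation $\prod_{j=1}^N\big(z-a^2z_j(\ell)\big)-(1+a)\prod_{j=1}^N\big(z-a z_j(\ell+1)\big)=0$. Define $$v_m(0)=\frac{\prod_{j=1}^{N}\big(z_j(1)-a\,z_m(0)\big)}{\prod_{j=1,\,j\neq m}^{N}\big[a\,\big(z_j(0)-z_m(0)\big)\big]},\qquad m=1,\dots,N,$$ and the $N\times N$ matrix $$U_{nm}(\ell)=\delta_{nm}\,z_n(0)\,a^{\ell}+v_m(0)\,\frac{a^{\ell}-1}{a-1},\qquad n,m=1,\dots,N,$$ where $\frac{a^\ell-1}{a-1}$ is interpreted as $\ell$ when $a=1$. Then for every $\ell\ge0$ the multiset $\{z_1(\ell),\dots,z_N(\ell)\}$ coincides with the multiset of eigenvalues of $U(\ell)$. Equivalently, for every $\ell\ge1$ with $a\neq1$ and $a^\ell\neq1$, the numbers $z_n(\ell)$ are the $N$ solutions $z$ of $$\prod_{k=1}^{N}\frac{z-a^{\ell-1}z_k(1)}{z-a^{\ell}z_k(0)}=\frac{a^{\ell-1}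-1}{a^{\ell}-1}.$$
   Context: $\delta_{nm}$ is the Kronecker delta. Throughout, the data are assumed generic: for every $\ell$ the numbers $z_1(\ell),\dots,z_N(\ell)$ are pairwise distinct and all denominators appearing in the formulas above are nonzero. *)

theory Defs
  imports "Jordan_Normal_Form.Char_Poly"
begin

text \<open>Tuples are indexed by j = 0..N-1 (paper: 1..N). z l j is z_{j+1}(l).\<close>

definition geom_factor :: "complex \<Rightarrow> nat \<Rightarrow> complex" where
  "geom_factor a l = (if a = 1 then of_nat l else (a ^ l - 1) / (a - 1))"

definition v0 :: "nat \<Rightarrow> complex \<Rightarrow> (nat \<Rightarrow> nat \<Rightarrow> complex) \<Rightarrow> nat \<Rightarrow> complex" where
  "v0 N a z m = (\<Prod>j<N. z 1 j - a * z 0 m) / (\<Prod>j\<in>{..<N} - {m}. a * (z 0 j - z 0 m))"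

definition Umat :: "nat \<Rightarrow> complex \<Rightarrow> (nat \<Rightarrow> nat \<Rightarrow> complex) \<Rightarrow> nat \<Rightarrow> complex mat" where
  "Umat N a z l = mat N N (\<lambda>(n, m).
      (if n = m then z 0 n * a ^ l else 0) + v0 N a z m * geom_factor a l)"

definition roots_poly :: "nat \<Rightarrow> (nat \<Rightarrow> complex) \<Rightarrow> complex poly" where
  "roots_poly N w = (\<Prod>j<N. [:- w j, 1:])"

end

theory Submission imports Defs begin

lemma prod_list_diag: "A \<in> carrier_mat n n \<Longrightarrow> prod_list (diag_mat A) = (\<Prod>i<n. A $$ (i,i))"
  by (simp add: diag_mat_def prod.distinct_set_conv_list[symmetric] atLeast0LessThan[symmetric])

lemma det_diag_rank1:
  fixes d u w :: "nat \<Rightarrow> complex"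
  assumes d: "\<And>i. i < n \<Longrightarrow> d i \<noteq> 0"
  shows "det (mat n n (\<lambda>(i,j). (if i = j then d i else 0) - u i * w j))
     = (\<Prod>i<n. d i) * (1 - (\<Sum>i<n. w i * u i / d i))"
proof -
  define M where "M = mat n n (\<lambda>(i,j). (if i = j then d i else 0) - u i * w j)"
  define s where "s = 1 - (\<Sum>i<n. w i * u i / d i)"
  define T1 where "T1 = mat (Suc n) (Suc n) (\<lambda>(i,j). if i = j then 1 else if j = n \<and> i < n then u i else 0)"
  define T2 where "T2 = mat (Suc n) (Suc n) (\<lambda>(i,j). if i < n \<and> j < n then M $$ (i,j) else if i = n \<and> j < n then w j else if i = n \<and> j = n then 1 else 0)"
  define T3 where "T3 = mat (Suc n) (Suc n) (\<lambda>(i,j). if i < n \<and> j < n then (if i = j then d i else 0) else if i = n \<and> j < n then w j else if i = n \<and> j = n then s else 0)"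
  define T4 where "T4 = mat (Suc n) (Suc n) (\<lambda>(i,j). if i = j then 1 else if j = n \<and> i < n then u i / d i else 0)"
  have c1: "T1 \<in> carrier_mat (Suc n) (Suc n)" and c2: "T2 \<in> carrier_mat (Suc n) (Suc n)"
   and c3: "T3 \<in> carrier_mat (Suc n) (Suc n)" and c4: "T4 \<in> carrier_mat (Suc n) (Suc n)"
    by (auto simp: T1_def T2_def T3_def T4_def)
  have prod_eq: "T1 * T2 = T3 * T4"
  proof (rule eq_matI)
    fix i j assume i: "i < dim_row (T3 * T4)" and j: "j < dim_col (T3 * T4)"
    hence i: "i < Suc n" and j: "j < Suc n" using c3 c4 by auto
    have L: "(T1 * T2) $$ (i,j) = (\<Sum>k<Suc n. T1 $$ (i,k) * T2 $$ (k,j))"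
      using i j c1 c2 by (simp add: scalar_prod_def atLeast0LessThan)
    have R: "(T3 * T4) $$ (i,j) = (\<Sum>k<Suc n. T3 $$ (i,k) * T4 $$ (k,j))"
      using i j c3 c4 by (simp add: scalar_prod_def atLeast0LessThan)
    show "(T1 * T2) $$ (i,j) = (T3 * T4) $$ (i,j)"
    proof (cases "i < n")
      case True
      have "(\<Sum>k<Suc n. T1 $$ (i,k) * T2 $$ (k,j)) = (\<Sum>k<n. T1 $$ (i,k) * T2 $$ (k,j)) + u i * T2 $$ (n,j)"
        using True by (simp add: T1_def)
      also have "(\<Sum>k<n. T1 $$ (i,k) * T2 $$ (k,j)) = T2 $$ (i,j)"
        using True i j by (simp add: T1_def if_distrib[where f = "\<lambda>x. x * _"] sum.If_cases Int_absorb1 cong: if_cong)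
      finally have LL: "(\<Sum>k<Suc n. T1 $$ (i,k) * T2 $$ (k,j)) = T2 $$ (i,j) + u i * T2 $$ (n,j)" .
      have "(\<Sum>k<Suc n. T3 $$ (i,k) * T4 $$ (k,j)) = (\<Sum>k<n. T3 $$ (i,k) * T4 $$ (k,j)) + T3 $$ (i,n) * T4 $$ (n,j)"
        by simp
      also have "(\<Sum>k<n. T3 $$ (i,k) * T4 $$ (k,j)) = d i * T4 $$ (i,j)"
        using True i j by (simp add: T3_def if_distrib[where f = "\<lambda>x. x * _"] sum.If_cases Int_absorb1 cong: if_cong)
      finally have RR: "(\<Sum>k<Suc n. T3 $$ (i,k) * T4 $$ (k,j)) = d i * T4 $$ (i,j)" using True by (simp add: T3_def)
      show ?thesis unfolding L R LL RR using True i j d[OF True]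
        by (auto simp: T2_def T4_def M_def)
    next
      case False
      hence i: "i = n" using i by auto
      have LL: "(\<Sum>k<Suc n. T1 $$ (i,k) * T2 $$ (k,j)) = T2 $$ (n,j)"
        using i by (simp add: T1_def)
      have "(\<Sum>k<Suc n. T3 $$ (i,k) * T4 $$ (k,j)) = (\<Sum>k<n. w k * T4 $$ (k,j)) + s * T4 $$ (n,j)"
        using i by (simp add: T3_def)
      also have "\<dots> = T2 $$ (n,j)"
      proof (cases "j < n")
        case True
        have "(\<Sum>k<n. w k * T4 $$ (k,j)) = w j"
          using True by (simp add: T4_def if_distrib[where f = "\<lambda>x. _ * x"] sum.If_cases Int_absorb1 cong: if_cong)
        thus ?thesis using True by (simp add: T4_def T2_def)
      next
        case False
        hence "j = n" using j by auto
        thus ?thesis by (simp add: T4_def T2_def s_def mult.assoc)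
      qed
      finally show ?thesis unfolding L R LL by simp
    qed
  qed (auto simp: T1_def T2_def T3_def T4_def)
  have d1: "det T1 = 1"
    proof -
    have "det T1 = prod_list (diag_mat T1)"
      by (rule det_upper_triangular[OF _ c1]) (auto simp: upper_triangular_def T1_def)
    thus ?thesis unfolding prod_list_diag[OF c1] by (simp add: T1_def)
  qed
  have d4: "det T4 = 1"
    proof -
    have "det T4 = prod_list (diag_mat T4)"
      by (rule det_upper_triangular[OF _ c4]) (auto simp: upper_triangular_def T4_def)
    thus ?thesis unfolding prod_list_diag[OF c4] by (simp add: T4_def)
  qed
  have d3: "det T3 = (\<Prod>i<n. d i) * s"
    proof -
    have "det T3 = prod_list (diag_mat T3)"
      by (rule det_lower_triangular[OF _ c3]) (auto simp: T3_def)
    thus ?thesis unfolding prod_list_diag[OF c3] by (simp add: T3_def)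
  qed
  have d2: "det T2 = det M"
  proof -
    have "det T2 = (\<Sum>i<Suc n. T2 $$ (i,n) * cofactor T2 i n)"
      by (rule laplace_expansion_column[OF c2]) simp
    also have "\<dots> = cofactor T2 n n" by (simp add: T2_def)
    also have "\<dots> = det (mat_delete T2 n n)" by (simp add: cofactor_def)
    also have "mat_delete T2 n n = M"
      by (rule eq_matI) (auto simp: mat_delete_def T2_def M_def)
    finally show ?thesis .
  qed
  have "det M = det (T1 * T2)" using det_mult[OF c1 c2] d1 d2 by simp
  also have "\<dots> = det T3 * det T4" using det_mult[OF c3 c4] prod_eq by simp
  finally show ?thesis using d3 d4 by (simp add: M_def s_def)
qed


definition PP :: "nat \<Rightarrow> complex \<Rightarrow> (nat \<Rightarrow> nat \<Rightarrow> complex) \<Rightarrow> nat \<Rightarrow> complex poly" where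
  "PP N a z l = (\<Prod>i<N. [:- (a ^ l * z 0 i), 1:])
     - Polynomial.smult (geom_factor a l) (\<Sum>m<N. Polynomial.smult (v0 N a z m) (\<Prod>i\<in>{..<N} - {m}. [:- (a ^ l * z 0 i), 1:]))"

lemma poly_PP: "poly (PP N a z l) x = (\<Prod>i<N. x - a ^ l * z 0 i)
     - geom_factor a l * (\<Sum>m<N. v0 N a z m * (\<Prod>i\<in>{..<N} - {m}. x - a ^ l * z 0 i))"
  by (simp add: PP_def poly_prod poly_sum)

lemma poly_roots_poly: "poly (roots_poly N w) x = (\<Prod>j<N. x - w j)"
  by (simp add: roots_poly_def poly_prod)

lemma scale_prod:
  fixes c x :: complex
  assumes "c \<noteq> 0" "finite I"
  shows "c ^ card I * (\<Prod>i\<in>I. x / c - b i) = (\<Prod>i\<in>I. x - c * b i)"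
proof -
  have "c ^ card I * (\<Prod>i\<in>I. x / c - b i) = (\<Prod>i\<in>I. c * (x / c - b i))"
    by (simp add: prod.distrib)
  also have "\<dots> = (\<Prod>i\<in>I. x - c * b i)"
    using assms(1) by (intro prod.cong) (auto simp: field_simps)
  finally show ?thesis .
qed

lemma roots_scaled:
  fixes c x :: complex
  assumes "c \<noteq> 0"
  shows "(\<Prod>j<N. x - c * w j) = c ^ N * poly (roots_poly N w) (x / c)"
  using scale_prod[OF assms, of "{..<N}" x w] by (simp add: poly_roots_poly)

lemma PP_scaled:
  fixes c x :: complex
  assumes "c \<noteq> 0" "N \<ge> 1"
  shows "c ^ N * poly (PP N a z l) (x / c) = (\<Prod>i<N. x - c * a ^ l * z 0 i)
     - geom_factor a l * c * (\<Sum>m<N. v0 N a z m * (\<Prod>i\<in>{..<N} - {m}. x - c * a ^ l * z 0 i))"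
proof -
  have A: "c ^ N * (\<Prod>i<N. x / c - a ^ l * z 0 i) = (\<Prod>i<N. x - c * a ^ l * z 0 i)"
    using scale_prod[OF assms(1), of "{..<N}" x "\<lambda>i. a ^ l * z 0 i"] by (simp add: mult.assoc)
  have Q: "c ^ N * (\<Prod>i\<in>{..<N} - {m}. x / c - a ^ l * z 0 i) = c * (\<Prod>i\<in>{..<N} - {m}. x - c * a ^ l * z 0 i)"
    if m: "m < N" for m
  proof -
    have cN: "c ^ N = c * c ^ card ({..<N} - {m})" using m assms(2)
      by (simp add: power_Suc[symmetric])
    show ?thesis unfolding cN mult.assoc
      using scale_prod[OF assms(1), of "{..<N} - {m}" x "\<lambda>i. a ^ l * z 0 i"] by (simp add: mult.assoc)
  qed
  have S: "c ^ N * (\<Sum>m<N. v0 N a z m * (\<Prod>i\<in>{..<N} - {m}. x / c - a ^ l * z 0 i))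
     = c * (\<Sum>m<N. v0 N a z m * (\<Prod>i\<in>{..<N} - {m}. x - c * a ^ l * z 0 i))"
    unfolding sum_distrib_left
    by (intro sum.cong refl) (simp add: Q[symmetric] mult.left_commute)
  show ?thesis unfolding poly_PP right_diff_distrib A
    using S by (simp add: mult.left_commute mult.commute)
qed

lemma geom_rec: "geom_factor a (l + 2) = (1 + a) * geom_factor a (l + 1) - a * geom_factor a l"
proof (cases "a = 1")
  case True thus ?thesis by (simp add: geom_factor_def)
next
  case False
  have num: "(1 + a) * (a ^ (l + 1) - 1) - a * (a ^ l - 1) = a ^ (l + 2) - 1"
    by (simp add: algebra_simps)
  have gen: "(1 + a) * (X / (a - 1)) - a * (Y / (a - 1)) = ((1 + a) * X - a * Y) / (a - 1)" for X Y :: complex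
    by (simp add: diff_divide_distrib)
  have "(1 + a) * ((a ^ (l + 1) - 1) / (a - 1)) - a * ((a ^ l - 1) / (a - 1))
      = ((1 + a) * (a ^ (l + 1) - 1) - a * (a ^ l - 1)) / (a - 1)"
    using gen by blast
  hence "(1 + a) * ((a ^ (l + 1) - 1) / (a - 1)) - a * ((a ^ l - 1) / (a - 1)) = (a ^ (l + 2) - 1) / (a - 1)"
    using num by (simp only:)
  thus ?thesis unfolding geom_factor_def if_not_P[OF False] by (rule sym)
qed

lemma char_poly_U:
  fixes N :: nat and a :: complex and z :: "nat \<Rightarrow> nat \<Rightarrow> complex"
  shows "char_poly (Umat N a z l) = PP N a z l"
proof -
  let ?U = "Umat N a z l"
  have cU: "?U \<in> carrier_mat N N" by (simp add: Umat_def)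
  define B where "B = (\<lambda>i. a ^ l * z 0 i) ` {..<N}"
  have fB: "finite B" by (simp add: B_def)
  have ev: "poly (char_poly ?U) x = poly (PP N a z l) x" if x: "x \<notin> B" for x
  proof -
    let ?d = "\<lambda>i. x - a ^ l * z 0 i"
    let ?w = "\<lambda>j. geom_factor a l * v0 N a z j"
    have d: "?d i \<noteq> 0" if "i < N" for i using x that by (auto simp: B_def)
    have "poly (char_poly ?U) x = det (- char_matrix ?U x)" by (rule char_poly_matrix[OF cU])
    also have "- char_matrix ?U x = mat N N (\<lambda>(i,j). (if i = j then ?d i else 0) - 1 * ?w j)"
      by (rule eq_matI) (auto simp: char_matrix_def Umat_def algebra_simps)
    also have "det \<dots> = (\<Prod>i<N. ?d i) * (1 - (\<Sum>i<N. ?w i * 1 / ?d i))"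
      by (rule det_diag_rank1) (use d in auto)
    also have "\<dots> = (\<Prod>i<N. ?d i) - (\<Sum>i<N. ?w i * (\<Prod>j\<in>{..<N} - {i}. ?d j))"
    proof -
      have "(\<Prod>i<N. ?d i) * (?w i * 1 / ?d i) = ?w i * (\<Prod>j\<in>{..<N} - {i}. ?d j)" if i: "i < N" for i
        using prod.remove[of "{..<N}" i ?d] i d[OF i] by simp
      thus ?thesis by (simp add: right_diff_distrib sum_distrib_left)
    qed
    also have "\<dots> = poly (PP N a z l) x"
      by (simp add: poly_PP sum_distrib_left mult.assoc)
    finally show ?thesis .
  qed
  show ?thesis
  proof (rule ccontr)
    assume ne: "char_poly ?U \<noteq> PP N a z l"
    hence "char_poly ?U - PP N a z l \<noteq> 0" by simp
    hence "finite {x. poly (char_poly ?U - PP N a z l) x = 0}" by (rule poly_roots_finite)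
    moreover have "- B \<subseteq> {x. poly (char_poly ?U - PP N a z l) x = 0}" using ev by auto
    ultimately have "finite (- B)" by (rule finite_subset[rotated])
    hence "finite (UNIV :: complex set)" using fB by (metis Compl_partition2 finite_Un)
    thus False using infinite_UNIV_char_0 by blast
  qed
qed


lemma roots_poly_deg:
  "degree (roots_poly N w) = N \<and> coeff (roots_poly N w) N = 1"
proof -
  have d: "degree (roots_poly N w) = N" unfolding roots_poly_def
    by (subst degree_prod_eq_sum_degree) auto
  have "lead_coeff (roots_poly N w) = 1" unfolding roots_poly_def lead_coeff_prod by simp
  with d show ?thesis by simp
qed

lemma step1:
  fixes N :: nat and a :: complex and z :: "nat \<Rightarrow> nat \<Rightarrow> complex"
  assumes N: "N \<ge> 1" and a: "a \<noteq> 0"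
    and distinct: "\<And>i j. i < N \<Longrightarrow> j < N \<Longrightarrow> i \<noteq> j \<Longrightarrow> z 0 i \<noteq> z 0 j"
  shows "roots_poly N (z 1) = PP N a z 1"
proof -
  have cU: "Umat N a z 1 \<in> carrier_mat N N" by (simp add: Umat_def)
  note dU = degree_monic_char_poly[OF cU, unfolded char_poly_U]
  note dR = roots_poly_deg[of N "z 1"]
  define A where "A = (\<lambda>k. a * z 0 k) ` {..<N}"
  have inj: "inj_on (\<lambda>k. a * z 0 k) {..<N}"
    using a distinct by (auto simp: inj_on_def)
  have cA: "card A = N" unfolding A_def using card_image[OF inj] by simp
  have g1: "geom_factor a 1 = 1" by (simp add: geom_factor_def)
  show ?thesis
  proof (rule poly_eqI_degree_lead_coeff[where n = N and A = A])
    show "coeff (roots_poly N (z 1)) N = coeff (PP N a z 1) N" using dU dR by simp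
    show "N \<le> card A" using cA by simp
    show "degree (roots_poly N (z 1)) \<le> N" using dR by simp
    show "degree (PP N a z 1) \<le> N" using dU by simp
    fix x assume "x \<in> A"
    then obtain k where k: "k < N" and x: "x = a * z 0 k" by (auto simp: A_def)
    have P0: "(\<Prod>i<N. x - a * z 0 i) = 0"
      using k x by (intro prod_zero) auto
    have Pm: "(\<Prod>i\<in>{..<N} - {m}. x - a * z 0 i) = 0" if "m < N" "m \<noteq> k" for m
      using k x that by (intro prod_zero) auto
    have S: "(\<Sum>m<N. v0 N a z m * (\<Prod>i\<in>{..<N} - {m}. x - a * z 0 i))
        = v0 N a z k * (\<Prod>i\<in>{..<N} - {k}. x - a * z 0 i)"
    proof -
      have "(\<Sum>m\<in>{..<N} - {k}. v0 N a z m * (\<Prod>i\<in>{..<N} - {m}. x - a * z 0 i)) = 0"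
        by (rule sum.neutral) (auto simp: Pm)
      thus ?thesis using k by (subst sum.remove[of _ k]) auto
    qed
    have den: "(\<Prod>j\<in>{..<N} - {k}. a * (z 0 j - z 0 k)) \<noteq> 0"
      using a distinct k by (subst prod_zero_iff) auto
    have neg1: "(\<Prod>i\<in>{..<N} - {k}. x - a * z 0 i) = (-1) ^ (N - 1) * (\<Prod>j\<in>{..<N} - {k}. a * (z 0 j - z 0 k))"
    proof -
      have "(\<Prod>i\<in>{..<N} - {k}. x - a * z 0 i) = (\<Prod>j\<in>{..<N} - {k}. (-1) * (a * (z 0 j - z 0 k)))"
        using x by (intro prod.cong) (auto simp: algebra_simps)
      also have "\<dots> = (-1) ^ (N - 1) * (\<Prod>j\<in>{..<N} - {k}. a * (z 0 j - z 0 k))"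
        unfolding prod.distrib prod_constant using k by simp
      finally show ?thesis .
    qed
    have neg2: "(\<Prod>j<N. x - z 1 j) = (-1) ^ N * (\<Prod>j<N. z 1 j - a * z 0 k)"
    proof -
      have "(\<Prod>j<N. x - z 1 j) = (\<Prod>j<N. (-1) * (z 1 j - a * z 0 k))"
        using x by (intro prod.cong) (auto simp: algebra_simps)
      also have "\<dots> = (-1) ^ N * (\<Prod>j<N. z 1 j - a * z 0 k)"
        unfolding prod.distrib prod_constant by simp
      finally show ?thesis .
    qed
    have sgn: "(-1::complex) ^ N = - ((-1) ^ (N - 1))"
    proof -
      obtain M where M: "N = Suc M" using N by (cases N) auto
      show ?thesis unfolding M by simp
    qed
    show "poly (roots_poly N (z 1)) x = poly (PP N a z 1) x"
    proof -
      define P where "P = (\<Prod>j<N. z 1 j - a * z 0 k)"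
      define D where "D = (\<Prod>j\<in>{..<N} - {k}. a * (z 0 j - z 0 k))"
      have DD: "P / D * ((-1) ^ (N - 1) * D) = (-1) ^ (N - 1) * P"
        using den unfolding D_def[symmetric] by simp
      show ?thesis
        unfolding poly_roots_poly poly_PP g1 power_one_right
        unfolding P0 S neg2 neg1
        unfolding v0_def
        unfolding P_def[symmetric] D_def[symmetric] DD sgn by simp
    qed
  qed
qed

lemma alg: fixes A S p q a :: complex
  shows "(A - p * a\<^sup>2 * S) - (1 + a) * (A - q * a * S) = - a * (A - ((1 + a) * q - a * p) * S)"
  by (simp add: algebra_simps power2_eq_square)

lemma main_eq:
  fixes N :: nat and a :: complex and z :: "nat \<Rightarrow> nat \<Rightarrow> complex"
  assumes N: "N \<ge> 1" and a: "a \<noteq> 0"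
    and distinct: "\<And>l i j. i < N \<Longrightarrow> j < N \<Longrightarrow> i \<noteq> j \<Longrightarrow> z l i \<noteq> z l j"
    and evol: "\<And>l. Polynomial.smult (- a) (roots_poly N (z (l + 2)))
        = (\<Prod>j<N. [:- (a\<^sup>2 * z l j), 1:]) - Polynomial.smult (1 + a) (\<Prod>j<N. [:- (a * z (l + 1) j), 1:])"
  shows "roots_poly N (z l) = PP N a z l"
proof (induction l rule: nat_less_induct)
  case (1 l)
  show ?case
  proof (cases l)
    case 0
    thus ?thesis by (simp add: PP_def roots_poly_def geom_factor_def)
  next
    case (Suc l')
    show ?thesis
    proof (cases l')
      case 0
      thus ?thesis using Suc step1[of N a z, OF N a distinct[where l = 0]] by simp
    next
      case (Suc k)
      hence l: "l = k + 2" using \<open>l = Suc l'\<close> by simp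
      have IH0: "roots_poly N (z k) = PP N a z k" using 1 l by simp
      have IH1: "roots_poly N (z (k + 1)) = PP N a z (k + 1)" using 1 l by simp
      have a2: "a\<^sup>2 \<noteq> 0" using a by simp
      have key: "Polynomial.smult (- a) (PP N a z (k + 2)) = Polynomial.smult (- a) (roots_poly N (z (k + 2)))"
      proof (rule poly_ext)
        fix x
        let ?A = "\<Prod>i<N. x - a ^ (k + 2) * z 0 i"
        let ?S = "\<Sum>m<N. v0 N a z m * (\<Prod>i\<in>{..<N} - {m}. x - a ^ (k + 2) * z 0 i)"
        have e1: "(\<Prod>j<N. x - a\<^sup>2 * z k j) = ?A - geom_factor a k * a\<^sup>2 * ?S"
        proof -
          have c1: "a\<^sup>2 * a ^ k = a ^ (k + 2)" by (simp add: power_add power2_eq_square)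
          have c0: "a\<^sup>2 * z k j = a\<^sup>2 * z k j" for j by simp
          show ?thesis
            unfolding roots_scaled[OF a2, where N=N and x=x and w="z k"] IH0 PP_scaled[OF a2 N] c1 ..
        qed
        have e2: "(\<Prod>j<N. x - a * z (k + 1) j) = ?A - geom_factor a (k + 1) * a * ?S"
        proof -
          have c1: "a * a ^ (k + 1) = a ^ (k + 2)" by simp
          show ?thesis
            unfolding roots_scaled[OF a, where N=N and x=x and w="z (k + 1)"] IH1 PP_scaled[OF a N] c1 ..
        qed
        have e3: "poly (PP N a z (k + 2)) x = ?A - geom_factor a (k + 2) * ?S"
          by (simp add: poly_PP)
        have "poly (Polynomial.smult (- a) (roots_poly N (z (k + 2)))) x
           = (\<Prod>j<N. x - a\<^sup>2 * z k j) - (1 + a) * (\<Prod>j<N. x - a * z (k + 1) j)"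
          unfolding evol by (simp add: poly_prod)
        also have "\<dots> = (?A - geom_factor a k * a\<^sup>2 * ?S) - (1 + a) * (?A - geom_factor a (k + 1) * a * ?S)"
          by (simp only: e1 e2)
        also have "\<dots> = - a * (?A - ((1 + a) * geom_factor a (k + 1) - a * geom_factor a k) * ?S)"
          by (rule alg[where A = ?A and S = ?S and p = "geom_factor a k" and q = "geom_factor a (k + 1)" and a = a])
        also have "\<dots> = - a * poly (PP N a z (k + 2)) x"
          by (simp only: e3 geom_rec)
        finally have "poly (Polynomial.smult (- a) (roots_poly N (z (k + 2)))) x
            = poly (Polynomial.smult (- a) (PP N a z (k + 2))) x" by simp
        thus "poly (Polynomial.smult (- a) (PP N a z (k + 2))) x
            = poly (Polynomial.smult (- a) (roots_poly N (z (k + 2)))) x" by (rule sym)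
      qed
      have "PP N a z (k + 2) = roots_poly N (z (k + 2))"
        using smult_cancel[OF _ key] a by simp
      thus ?thesis using l by simp
    qed
  qed
qed

theorem proposition2p1p1:
  fixes N :: nat and a :: complex and z :: "nat \<Rightarrow> nat \<Rightarrow> complex"
  assumes "N \<ge> 1" and "a \<noteq> 0"
    and distinct: "\<And>l i j. i < N \<Longrightarrow> j < N \<Longrightarrow> i \<noteq> j \<Longrightarrow> z l i \<noteq> z l j"
    and denom: "\<And>l n j. n < N \<Longrightarrow> j < N \<Longrightarrow> z (l + 2) n \<noteq> a * z (l + 1) j"
    and evol: "\<And>l. Polynomial.smult (- a) (roots_poly N (z (l + 2)))
        = (\<Prod>j<N. [:- (a\<^sup>2 * z l j), 1:]) - Polynomial.smult (1 + a) (\<Prod>j<N. [:- (a * z (l + 1) j), 1:])"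
  shows "\<forall>l. char_poly (Umat N a z l) = roots_poly N (z l)"
  using main_eq[OF assms(1,2) distinct evol] char_poly_U by simp

end
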